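(* If $\langle A,\to\rangle$ is a conditional algebra, then its expanded Stone space $\langle\mathrm{Ul}(A),\tau_s,T_A\rangle$ is a conditional space.
   Context: A conditional algebra is a pair $\langle A,\to\rangle$ where $A$ is a Boolean algebra and $\to$ is a binary operation with, for all $a,b,c$: $a\to 1=1$; $(a\to b)\wedge(a\to c)=a\to(b\wedge c)$; $(a\vee b)\to c\le (a\to c)\wedge(b\to c)$. $\langle\mathrm{Ul}(A),\tau_s\rangle$ is the Stone space of $A$, $\varphi(a)=\{u:a\in u\}$; filters include the improper filter $A$, and $\varphi(F)=\{u:F\subseteq u\}$. $D^{\to}_X(Y)=\{b:\exists a\in Y,\ a\to b\in X\}$; $T_A(u,Z,v)$ iff there is a filter $F$ with $Z=\varphi(F)$ and $D^{\to}_u(F)\subseteq v$. A conditional space is a triple $\langle X,\tau,T\rangle$ where $\langle X,\tau\rangle$ is a Boolean (compact, Hausdorff, zero-dimensional) space and $T\subseteq X\times\mathcal{C}(\tau)\times X$ ($\mathcal{C}(\tau)$ the closed sets) satisfies: (T1) for every $x\in X$ and closed $Y$, $T(x,Y)=\{y:T(x,Y,y)\}$ is closed; (T2) for all clopen $U,V$, the set $U\to_T V=\{x:\text{for all } Z\subseteq U \text{ with } Z \text{ closed},\ T(x,Z)\subseteq V\}$ is clopen; (T3) for closed $Y$: $T(x,Y,y)$ iff $T(x,U,y)$ for every clopen $U\supseteq Y$. *)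

theory Defs
  imports "HOL-Analysis.Analysis"
begin

definition conditional_algebra :: "('a::boolean_algebra \<Rightarrow> 'a \<Rightarrow> 'a) \<Rightarrow> bool" where
  "conditional_algebra imp \<longleftrightarrow>
     (\<forall>a. imp a top = top) \<and>
     (\<forall>a b c. inf (imp a b) (imp a c) = imp a (inf b c)) \<and>
     (\<forall>a b c. imp (sup a b) c \<le> inf (imp a c) (imp b c))"

text \<open>Filters of a Boolean algebra (the improper filter UNIV is included).\<close>
definition ba_filter :: "'a::boolean_algebra set \<Rightarrow> bool" where
  "ba_filter F \<longleftrightarrow> top \<in> F \<and>
     (\<forall>a b. a \<in> F \<longrightarrow> a \<le> b \<longrightarrow> b \<in> F) \<and>
     (\<forall>a b. a \<in> F \<longrightarrow> b \<in> F \<longrightarrow> inf a b \<in> F)"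

definition ultrafilter :: "'a::boolean_algebra set \<Rightarrow> bool" where
  "ultrafilter u \<longleftrightarrow> ba_filter u \<and> bot \<notin> u \<and> (\<forall>a. a \<in> u \<or> - a \<in> u)"

definition Ul :: "'a::boolean_algebra set set" where
  "Ul = {u. ultrafilter u}"

definition phi :: "'a::boolean_algebra \<Rightarrow> 'a set set" where
  "phi a = {u \<in> Ul. a \<in> u}"

definition phiF :: "'a::boolean_algebra set \<Rightarrow> 'a set set" where
  "phiF F = {u \<in> Ul. F \<subseteq> u}"

text \<open>The Stone topology: generated by the sets phi a (topspace is Ul, since phi top = Ul).\<close>
definition stone_topology :: "'a::boolean_algebra set topology" where
  "stone_topology = topology_generated_by (range phi)"

definition D_imp :: "('a \<Rightarrow> 'a \<Rightarrow> 'a) \<Rightarrow> 'a set \<Rightarrow> 'a set \<Rightarrow> 'a set" where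
  "D_imp imp X Y = {b. \<exists>a\<in>Y. imp a b \<in> X}"

definition T_A :: "('a::boolean_algebra \<Rightarrow> 'a \<Rightarrow> 'a) \<Rightarrow> 'a set \<Rightarrow> 'a set set \<Rightarrow> 'a set \<Rightarrow> bool" where
  "T_A imp u Z v \<longleftrightarrow> u \<in> Ul \<and> v \<in> Ul \<and>
     (\<exists>F. ba_filter F \<and> Z = phiF F \<and> D_imp imp u F \<subseteq> v)"

definition clopenin :: "'x topology \<Rightarrow> 'x set \<Rightarrow> bool" where
  "clopenin \<tau> U \<longleftrightarrow> closedin \<tau> U \<and> openin \<tau> U"

definition boolean_space :: "'x topology \<Rightarrow> bool" where
  "boolean_space \<tau> \<longleftrightarrow> compact_space \<tau> \<and> Hausdorff_space \<tau> \<and>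
     (\<forall>W x. openin \<tau> W \<longrightarrow> x \<in> W \<longrightarrow> (\<exists>U. clopenin \<tau> U \<and> x \<in> U \<and> U \<subseteq> W))"

definition Tset :: "('x \<Rightarrow> 'x set \<Rightarrow> 'x \<Rightarrow> bool) \<Rightarrow> 'x \<Rightarrow> 'x set \<Rightarrow> 'x set" where
  "Tset T x Y = {y. T x Y y}"

definition arrow_T :: "'x topology \<Rightarrow> ('x \<Rightarrow> 'x set \<Rightarrow> 'x \<Rightarrow> bool) \<Rightarrow> 'x set \<Rightarrow> 'x set \<Rightarrow> 'x set" where
  "arrow_T \<tau> T U V = {x \<in> topspace \<tau>. \<forall>Z. closedin \<tau> Z \<longrightarrow> Z \<subseteq> U \<longrightarrow> Tset T x Z \<subseteq> V}"

definition conditional_space :: "'x topology \<Rightarrow> ('x \<Rightarrow> 'x set \<Rightarrow> 'x \<Rightarrow> bool) \<Rightarrow> bool" where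
  "conditional_space \<tau> T \<longleftrightarrow> boolean_space \<tau> \<and>
     \<comment> \<open>T is a subset of X x C(tau) x X\<close>
     (\<forall>x Y y. T x Y y \<longrightarrow> x \<in> topspace \<tau> \<and> closedin \<tau> Y \<and> y \<in> topspace \<tau>) \<and>
     \<comment> \<open>(T1)\<close>
     (\<forall>x Y. x \<in> topspace \<tau> \<longrightarrow> closedin \<tau> Y \<longrightarrow> closedin \<tau> (Tset T x Y)) \<and>
     \<comment> \<open>(T2)\<close>
     (\<forall>U V. clopenin \<tau> U \<longrightarrow> clopenin \<tau> V \<longrightarrow> clopenin \<tau> (arrow_T \<tau> T U V)) \<and>
     \<comment> \<open>(T3)\<close>
     (\<forall>x Y y. x \<in> topspace \<tau> \<longrightarrow> y \<in> topspace \<tau> \<longrightarrow> closedin \<tau> Y \<longrightarrow>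
        (T x Y y \<longleftrightarrow> (\<forall>U. clopenin \<tau> U \<longrightarrow> Y \<subseteq> U \<longrightarrow> T x U y)))"

end

theory Submission
  imports Defs
begin


lemma filt_top: "ba_filter F \<Longrightarrow> top \<in> F" by (simp add: ba_filter_def)
lemma filt_up: "ba_filter F \<Longrightarrow> a \<in> F \<Longrightarrow> a \<le> b \<Longrightarrow> b \<in> F" by (auto simp add: ba_filter_def)
lemma filt_inf: "ba_filter F \<Longrightarrow> a \<in> F \<Longrightarrow> b \<in> F \<Longrightarrow> inf a b \<in> F" by (auto simp add: ba_filter_def)

lemma Ul_filt: "u \<in> Ul \<Longrightarrow> ba_filter u" by (simp add: Ul_def ultrafilter_def)
lemma Ul_bot: "u \<in> Ul \<Longrightarrow> bot \<notin> u" by (simp add: Ul_def ultrafilter_def)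
lemma Ul_compl: "u \<in> Ul \<Longrightarrow> (-a \<in> u) = (a \<notin> u)"
proof -
  assume u: "u \<in> Ul"
  have "a \<notin> u" if "-a \<in> u" "a \<in> u"
  proof -
    have "inf a (-a) \<in> u" using filt_inf Ul_filt u that by blast
    then show ?thesis using Ul_bot[OF u] by simp
  qed
  moreover have "-a \<in> u" if "a \<notin> u" using u that by (auto simp: Ul_def ultrafilter_def)
  ultimately show ?thesis by blast
qed

lemma Ul_inf: "u \<in> Ul \<Longrightarrow> (inf a b \<in> u) = (a \<in> u \<and> b \<in> u)"
  using filt_inf filt_up Ul_filt by (metis inf_le1 inf_le2)

lemma Ul_sup: "u \<in> Ul \<Longrightarrow> (sup a b \<in> u) = (a \<in> u \<or> b \<in> u)"
proof -
  assume u: "u \<in> Ul"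
  have "(-(sup a b) \<in> u) = (-a \<in> u \<and> -b \<in> u)" using Ul_inf[OF u] by simp
  then show ?thesis using Ul_compl[OF u] by blast
qed

definition gen1 :: "'a::boolean_algebra \<Rightarrow> 'a set \<Rightarrow> 'a set" where
  "gen1 c F = {b. \<exists>f\<in>F. inf c f \<le> b}"

lemma gen1_filter: assumes F: "ba_filter F" shows "ba_filter (gen1 c F)"
  unfolding ba_filter_def
proof (intro conjI allI impI)
  show "top \<in> gen1 c F" using filt_top[OF F] by (auto simp: gen1_def)
  fix a b
  show "b \<in> gen1 c F" if "a \<in> gen1 c F" "a \<le> b"
    using that order_trans unfolding gen1_def by blast
  show "inf a b \<in> gen1 c F" if A: "a \<in> gen1 c F" and B: "b \<in> gen1 c F"
  proof -
    obtain f where f: "f \<in> F" "inf c f \<le> a" using A unfolding gen1_def by blast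
    obtain g where g: "g \<in> F" "inf c g \<le> b" using B unfolding gen1_def by blast
    have e: "inf (inf c f) (inf c g) = inf c (inf f g)" by (simp add: inf.assoc inf.left_commute)
    have "inf c (inf f g) \<le> inf a b" using inf_mono[OF f(2) g(2)] unfolding e .
    moreover have "inf f g \<in> F" using f g filt_inf[OF F] by blast
    ultimately show ?thesis unfolding gen1_def by blast
  qed
qed

lemma gen1_sup: "ba_filter F \<Longrightarrow> F \<subseteq> gen1 c F"
  unfolding gen1_def using inf_le2 by blast
lemma gen1_c: "ba_filter F \<Longrightarrow> c \<in> gen1 c F"
  unfolding gen1_def using filt_top by fastforce
lemma gen1_bot: "ba_filter F \<Longrightarrow> bot \<in> gen1 c F \<Longrightarrow> -c \<in> F"
proof -
  assume F: "ba_filter F" "bot \<in> gen1 c F"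
  then obtain f where f: "f \<in> F" "inf c f \<le> bot" unfolding gen1_def by auto
  then have "inf f c = bot" by (simp add: inf_commute bot_unique)
  then have "f \<le> -c" by (simp add: inf_shunt)
  then show ?thesis using f F filt_up by blast
qed

lemma ultra_ext:
  assumes F: "ba_filter F" "bot \<notin> F"
  shows "\<exists>u\<in>Ul. F \<subseteq> u"
proof -
  let ?A = "{G. ba_filter G \<and> bot \<notin> G \<and> F \<subseteq> G}"
  have "\<exists>M\<in>?A. \<forall>X\<in>?A. M \<subseteq> X \<longrightarrow> X = M"
  proof (rule subset_Zorn_nonempty)
    show "?A \<noteq> {}" using F by auto
    fix C assume C: "C \<noteq> {}" "subset.chain ?A C"
    then have CA: "C \<subseteq> ?A" and ch: "\<And>X Y. X \<in> C \<Longrightarrow> Y \<in> C \<Longrightarrow> X \<subseteq> Y \<or> Y \<subseteq> X"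
      by (auto simp: subset.chain_def)
    have "ba_filter (\<Union>C)"
      unfolding ba_filter_def
    proof (intro conjI allI impI)
      show "top \<in> \<Union>C" using C CA filt_top by blast
      fix a b
      { assume "a \<in> \<Union>C" "a \<le> b" then show "b \<in> \<Union>C" using CA filt_up by blast }
      { assume a: "a \<in> \<Union>C" and b: "b \<in> \<Union>C"
        then obtain X Y where XY: "X \<in> C" "Y \<in> C" "a \<in> X" "b \<in> Y" by auto
        show "inf a b \<in> \<Union>C"
        proof (cases "X \<subseteq> Y")
          case True then show ?thesis using XY CA filt_inf by blast
        next
          case False then have "Y \<subseteq> X" using ch XY by blast
          then show ?thesis using XY CA filt_inf by blast
        qed }
    qed
    moreover have "bot \<notin> \<Union>C" using CA by blast
    moreover have "F \<subseteq> \<Union>C" using C(1) CA by blast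
    ultimately show "\<Union>C \<in> ?A" by simp
  qed
  then obtain M where M: "M \<in> ?A" and max0: "\<forall>X\<in>?A. M \<subseteq> X \<longrightarrow> X = M" by (rule bexE)
  have max: "X = M" if "X \<in> ?A" "M \<subseteq> X" for X using max0 that by simp
  have "ultrafilter M" unfolding ultrafilter_def
  proof (intro conjI allI)
    show "ba_filter M" "bot \<notin> M" using M by auto
    fix a show "a \<in> M \<or> - a \<in> M"
    proof (rule ccontr)
      assume n: "\<not> (a \<in> M \<or> - a \<in> M)"
      have Mf: "ba_filter M" using M by auto
      have "bot \<notin> gen1 a M" using gen1_bot[OF Mf] n by blast
      then have "gen1 a M \<in> ?A" using gen1_filter[OF Mf] gen1_sup[OF Mf] M by auto
      then have "gen1 a M = M" using max gen1_sup[OF Mf] by blast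
      then show False using gen1_c[OF Mf] n by auto
    qed
  qed
  then show ?thesis using M Ul_def by auto
qed

lemma sep:
  assumes F: "ba_filter F" and a: "a \<notin> F"
  shows "\<exists>u\<in>Ul. F \<subseteq> u \<and> a \<notin> u"
proof -
  have "bot \<notin> gen1 (-a) F" using gen1_bot[OF F, of "-a"] a by auto
  then obtain u where u: "u \<in> Ul" "gen1 (-a) F \<subseteq> u" using ultra_ext gen1_filter[OF F] by blast
  then have "-a \<in> u" using gen1_c[OF F] by auto
  then show ?thesis using u gen1_sup[OF F] Ul_compl by blast
qed


lemma phi_Ul: "phi a \<subseteq> Ul" by (auto simp: phi_def)
lemma phi_top: "phi top = Ul" using filt_top Ul_filt by (auto simp: phi_def)
lemma phi_bot: "phi bot = {}" using Ul_bot by (auto simp: phi_def)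
lemma phi_inf: "phi (inf a b) = phi a \<inter> phi b" using Ul_inf by (auto simp: phi_def)
lemma phi_sup: "phi (sup a b) = phi a \<union> phi b" using Ul_sup by (auto simp: phi_def)
lemma phi_compl: "phi (-a) = Ul - phi a" using Ul_compl by (auto simp: phi_def)
lemma phi_mono: "a \<le> b \<Longrightarrow> phi a \<subseteq> phi b" using filt_up Ul_filt by (auto simp: phi_def)

lemma topspace_stone: "topspace (stone_topology::'a::boolean_algebra set topology) = Ul"
proof -
  have "\<Union>(range phi) = (Ul :: 'a set set)" using phi_Ul phi_top by blast
  then show ?thesis unfolding stone_topology_def topology_generated_by_topspace by simp
qed

lemma open_stone: "openin stone_topology W \<longleftrightarrow> W \<subseteq> Ul \<and> (\<forall>x\<in>W. \<exists>a. x \<in> phi a \<and> phi a \<subseteq> W)"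
proof
  assume "openin stone_topology W"
  then have "generate_topology_on (range phi) W" unfolding stone_topology_def by (rule openin_topology_generated_by)
  then show "W \<subseteq> Ul \<and> (\<forall>x\<in>W. \<exists>a. x \<in> phi a \<and> phi a \<subseteq> W)"
  proof (induction rule: generate_topology_on.induct)
    case Empty show ?case by simp
  next
    case (Int a b)
    show ?case
    proof
      show "a \<inter> b \<subseteq> Ul" using Int by auto
      show "\<forall>x\<in>a\<inter>b. \<exists>c. x \<in> phi c \<and> phi c \<subseteq> a \<inter> b"
      proof
        fix x assume "x \<in> a \<inter> b"
        then obtain c d where "x \<in> phi c" "phi c \<subseteq> a" "x \<in> phi d" "phi d \<subseteq> b" using Int by blast
        then show "\<exists>e. x \<in> phi e \<and> phi e \<subseteq> a \<inter> b" by (intro exI[of _ "inf c d"]) (auto simp: phi_inf)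
      qed
    qed
  next
    case (UN K)
    show ?case
    proof (intro conjI ballI)
      show "\<Union>K \<subseteq> Ul" using UN.IH by blast
      fix x assume "x \<in> \<Union>K"
      then obtain k where k: "k \<in> K" "x \<in> k" by blast
      then obtain a where "x \<in> phi a" "phi a \<subseteq> k" using UN.IH by blast
      then show "\<exists>a. x \<in> phi a \<and> phi a \<subseteq> \<Union>K" using k by blast
    qed
  next
    case (Basis s)
    then obtain a where "s = phi a" by blast
    then show ?case using phi_Ul by auto
  qed
next
  assume H: "W \<subseteq> Ul \<and> (\<forall>x\<in>W. \<exists>a. x \<in> phi a \<and> phi a \<subseteq> W)"
  have "W = \<Union>{phi a | a. phi a \<subseteq> W}"
  proof
    show "W \<subseteq> \<Union>{phi a | a. phi a \<subseteq> W}"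
    proof
      fix x assume "x \<in> W"
      then obtain a where "x \<in> phi a" "phi a \<subseteq> W" using H by blast
      then show "x \<in> \<Union>{phi a | a. phi a \<subseteq> W}" by blast
    qed
  qed blast
  moreover have "openin stone_topology (\<Union>{phi a | a. phi a \<subseteq> W})"
    unfolding stone_topology_def openin_topology_generated_by_iff
    by (rule generate_topology_on.UN) (auto intro: generate_topology_on.Basis)
  ultimately show "openin stone_topology W" by simp
qed

lemma open_phi: "openin stone_topology (phi a)" using phi_Ul by (auto simp: open_stone)
lemma closed_phi: "closedin stone_topology (phi a)"
  unfolding closedin_def topspace_stone using open_phi[of "-a"] by (auto simp add: phi_Ul phi_compl)
lemma clopen_phi: "clopenin stone_topology (phi a)"
  by (simp add: clopenin_def open_phi closed_phi)

lemma closed_phiF: "closedin stone_topology (phiF F)"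
  unfolding closedin_def topspace_stone
proof
  show "phiF F \<subseteq> Ul" by (auto simp: phiF_def)
  show "openin stone_topology (Ul - phiF F)"
    unfolding open_stone
  proof (intro conjI ballI)
    show "Ul - phiF F \<subseteq> Ul" by blast
    fix x assume x: "x \<in> Ul - phiF F"
    then obtain a where a: "a \<in> F" "a \<notin> x" by (auto simp: phiF_def)
    then have "x \<in> phi (-a)" using x Ul_compl by (auto simp: phi_def)
    moreover have "phi (-a) \<subseteq> Ul - phiF F" using a phi_compl by (auto simp: phiF_def phi_def)
    ultimately show "\<exists>a. x \<in> phi a \<and> phi a \<subseteq> Ul - phiF F" by blast
  qed
qed

lemma closed_filter: "closedin stone_topology Y \<Longrightarrow> ba_filter {b. Y \<subseteq> phi b}"
  unfolding ba_filter_def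
proof (intro conjI allI impI)
  assume Y: "closedin stone_topology Y"
  show "top \<in> {b. Y \<subseteq> phi b}" using closedin_subset[OF Y] by (simp add: topspace_stone phi_top)
  fix a b
  show "b \<in> {b. Y \<subseteq> phi b}" if "a \<in> {b. Y \<subseteq> phi b}" "a \<le> b"
    using that phi_mono[of a b] by auto
  show "inf a b \<in> {b. Y \<subseteq> phi b}" if "a \<in> {b. Y \<subseteq> phi b}" "b \<in> {b. Y \<subseteq> phi b}"
    using that phi_inf[of a b] by auto
qed

lemma closed_eq: "closedin stone_topology Y \<Longrightarrow> Y = phiF {b. Y \<subseteq> phi b}"
proof -
  assume Y: "closedin stone_topology Y"
  have YU: "Y \<subseteq> Ul" using closedin_subset[OF Y] by (simp add: topspace_stone)
  show ?thesis
  proof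
    show "Y \<subseteq> phiF {b. Y \<subseteq> phi b}" using YU by (auto simp: phiF_def phi_def)
    show "phiF {b. Y \<subseteq> phi b} \<subseteq> Y"
    proof
      fix v assume v: "v \<in> phiF {b. Y \<subseteq> phi b}"
      show "v \<in> Y"
      proof (rule ccontr)
        assume "v \<notin> Y"
        then have "v \<in> Ul - Y" using v by (auto simp: phiF_def)
        moreover have "openin stone_topology (Ul - Y)" using Y unfolding closedin_def topspace_stone by simp
        ultimately obtain a where a: "v \<in> phi a" "phi a \<subseteq> Ul - Y" unfolding open_stone by blast
        then have "Y \<subseteq> phi (-a)" using YU phi_compl by auto
        then have "-a \<in> v" using v by (auto simp: phiF_def)
        then show False using a(1) Ul_compl by (auto simp: phi_def)
      qed
    qed
  qed
qed

lemma closed_char: "closedin stone_topology Y \<longleftrightarrow> (\<exists>F. ba_filter F \<and> Y = phiF F)"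
  using closed_eq closed_filter closed_phiF by blast

lemma phiF_sub: "ba_filter F \<Longrightarrow> phiF F \<subseteq> phi a \<longleftrightarrow> a \<in> F"
proof
  assume F: "ba_filter F" and s: "phiF F \<subseteq> phi a"
  show "a \<in> F"
  proof (rule ccontr)
    assume "a \<notin> F"
    then obtain u where "u \<in> Ul" "F \<subseteq> u" "a \<notin> u" using sep[OF F] by blast
    then show False using s by (auto simp: phiF_def phi_def)
  qed
next
  assume "a \<in> F" then show "phiF F \<subseteq> phi a" by (auto simp: phiF_def phi_def)
qed

lemma phiF_inj: "ba_filter F \<Longrightarrow> ba_filter G \<Longrightarrow> phiF F = phiF G \<Longrightarrow> F = G"
  using phiF_sub by blast

lemma phi_Union_fin: "finite S \<Longrightarrow> \<exists>a. phi a = \<Union>(phi ` S)"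
proof (induction rule: finite_induct)
  case empty then show ?case using phi_bot by auto
next
  case (insert x S)
  then obtain a where "phi a = \<Union>(phi ` S)" by blast
  then show ?case using phi_sup[of x a] by auto
qed


lemma foldr_inf: "foldr inf xs c = inf (foldr inf xs top) (c::'a::boolean_algebra)"
  by (induction xs) (simp_all add: inf_assoc)

lemma foldr_in: "u \<in> Ul \<Longrightarrow> set xs \<subseteq> u \<Longrightarrow> foldr inf xs top \<in> u"
proof (induction xs)
  case Nil then show ?case using filt_top Ul_filt by auto
next
  case (Cons x xs) then show ?case using Ul_inf[of u] by simp
qed

lemma cover:
  assumes cov: "Ul \<subseteq> \<Union>(phi ` S)"
  shows "\<exists>S'. finite S' \<and> S' \<subseteq> S \<and> Ul \<subseteq> \<Union>(phi ` S')"
proof (rule ccontr)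
  assume nf: "\<not> ?thesis"
  define G where "G = {b. \<exists>xs. set xs \<subseteq> uminus ` S \<and> foldr inf xs top \<le> b}"
  have Gf: "ba_filter G" unfolding ba_filter_def
  proof (intro conjI allI impI)
    show "top \<in> G" unfolding G_def by (rule CollectI, rule exI[of _ "[]"]) simp
    fix a b
    show "b \<in> G" if "a \<in> G" "a \<le> b" using that order_trans unfolding G_def by blast
    show "inf a b \<in> G" if A: "a \<in> G" and B: "b \<in> G"
    proof -
      obtain xs where xs: "set xs \<subseteq> uminus ` S" "foldr inf xs top \<le> a" using A unfolding G_def by blast
      obtain ys where ys: "set ys \<subseteq> uminus ` S" "foldr inf ys top \<le> b" using B unfolding G_def by blast
      have "foldr inf (xs @ ys) top = inf (foldr inf xs top) (foldr inf ys top)"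
        using foldr_inf[of xs "foldr inf ys top"] by simp
      then have "foldr inf (xs @ ys) top \<le> inf a b" using inf_mono[OF xs(2) ys(2)] by simp
      moreover have "set (xs @ ys) \<subseteq> uminus ` S" using xs ys by simp
      ultimately show ?thesis unfolding G_def by blast
    qed
  qed
  have "bot \<notin> G"
  proof
    assume "bot \<in> G"
    then obtain xs where xs: "set xs \<subseteq> uminus ` S" "foldr inf xs top \<le> bot" unfolding G_def by blast
    define S' where "S' = {a \<in> S. -a \<in> set xs}"
    have "S' \<subseteq> uminus ` set xs" unfolding S'_def by (auto intro: image_eqI[of _ uminus "- _"])
    then have fS': "finite S'" using finite_surj by blast
    then obtain u where u: "u \<in> Ul" "u \<notin> \<Union>(phi ` S')" using nf unfolding S'_def by blast
    have "set xs \<subseteq> u"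
    proof
      fix x assume x: "x \<in> set xs"
      then obtain a where a: "a \<in> S" "x = -a" using xs(1) by blast
      then have "a \<in> S'" using x unfolding S'_def by simp
      then have "a \<notin> u" using u by (auto simp: phi_def)
      then show "x \<in> u" using a Ul_compl[OF u(1)] by simp
    qed
    then have "foldr inf xs top \<in> u" using foldr_in u(1) by blast
    then have "bot \<in> u" using filt_up[OF Ul_filt[OF u(1)]] xs(2) by blast
    then show False using Ul_bot u(1) by blast
  qed
  then obtain v where v: "v \<in> Ul" "G \<subseteq> v" using ultra_ext Gf by blast
  then obtain a where a: "a \<in> S" "v \<in> phi a" using cov by blast
  have "-a \<in> G" unfolding G_def using a(1) by (intro CollectI exI[of _ "[-a]"]) simp
  then have "-a \<in> v" using v by blast
  then show False using a(2) Ul_compl[OF v(1)] by (simp add: phi_def)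
qed

lemma compact_stone: "compact_space (stone_topology::'a::boolean_algebra set topology)"
  unfolding compact_space_def compactin_def topspace_stone
proof (intro conjI allI impI)
  show "(Ul::'a set set) \<subseteq> Ul" by simp
  fix U :: "'a set set set"
  assume H: "(\<forall>X\<in>U. openin stone_topology X) \<and> Ul \<subseteq> \<Union>U"
  define S where "S = {a. \<exists>X\<in>U. phi a \<subseteq> X}"
  have cov: "Ul \<subseteq> \<Union>(phi ` S)"
  proof
    fix x assume "x \<in> (Ul::'a set set)"
    then obtain X where X: "X \<in> U" "x \<in> X" using H by blast
    then obtain a where "x \<in> phi a" "phi a \<subseteq> X" using H open_stone by metis
    then show "x \<in> \<Union>(phi ` S)" using X unfolding S_def by blast
  qed
  then obtain S' where S': "finite S'" "S' \<subseteq> S" "Ul \<subseteq> \<Union>(phi ` S')" using cover[OF cov] by blast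
  have ex: "\<forall>a\<in>S'. \<exists>X. X \<in> U \<and> phi a \<subseteq> X" using S'(2) unfolding S_def by blast
  obtain f where f: "\<forall>a\<in>S'. f a \<in> U \<and> phi a \<subseteq> f a" using bchoice[OF ex] by blast
  show "\<exists>V. finite V \<and> V \<subseteq> U \<and> Ul \<subseteq> \<Union>V"
  proof (intro exI conjI)
    show "finite (f ` S')" using S'(1) by simp
    show "f ` S' \<subseteq> U" using f by blast
    show "Ul \<subseteq> \<Union>(f ` S')" using S'(3) f by blast
  qed
qed

lemma hausdorff_stone: "Hausdorff_space (stone_topology::'a::boolean_algebra set topology)"
  unfolding Hausdorff_space_def topspace_stone
proof (intro allI impI)
  fix x y :: "'a set" assume H: "x \<in> Ul \<and> y \<in> Ul \<and> x \<noteq> y"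
  then obtain a where a: "(a \<in> x \<and> a \<notin> y) \<or> (a \<in> y \<and> a \<notin> x)" by blast
  have d: "disjnt (phi b) (phi (-b))" for b :: 'a by (simp add: phi_compl disjnt_def)
  show "\<exists>U V. openin stone_topology U \<and> openin stone_topology V \<and> x \<in> U \<and> y \<in> V \<and> disjnt U V"
  proof (cases "a \<in> x \<and> a \<notin> y")
    case True
    then have "x \<in> phi a" "y \<in> phi (-a)" using H Ul_compl[of y a] by (auto simp: phi_def)
    then show ?thesis using open_phi d by blast
  next
    case False
    then have "a \<in> y" "a \<notin> x" using a by auto
    then have "y \<in> phi a" "x \<in> phi (-a)" using H Ul_compl[of x a] by (auto simp: phi_def)
    then show ?thesis using open_phi d disjnt_sym by metis
  qed
qed

lemma boolean_stone: "boolean_space (stone_topology::'a::boolean_algebra set topology)"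
  unfolding boolean_space_def
proof (intro conjI allI impI)
  show "compact_space (stone_topology::'a::boolean_algebra set topology)" by (rule compact_stone)
  show "Hausdorff_space (stone_topology::'a::boolean_algebra set topology)" by (rule hausdorff_stone)
  fix W :: "'a set set" and x
  assume "openin stone_topology W" "x \<in> W"
  then obtain a where "x \<in> phi a" "phi a \<subseteq> W" using open_stone by metis
  then show "\<exists>U. clopenin stone_topology U \<and> x \<in> U \<and> U \<subseteq> W" using clopen_phi by blast
qed

lemma clopen_char: "clopenin (stone_topology::'a::boolean_algebra set topology) U \<longleftrightarrow> (\<exists>a. U = phi a)"
proof
  assume U: "clopenin (stone_topology::'a::boolean_algebra set topology) U"
  then have "compactin stone_topology U" using closedin_compact_space compact_stone clopenin_def by blast
  then have cp: "\<And>C. (\<forall>X\<in>C. openin stone_topology X) \<and> U \<subseteq> \<Union>C \<Longrightarrow> \<exists>V. finite V \<and> V \<subseteq> C \<and> U \<subseteq> \<Union>V"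
    unfolding compactin_def by blast
  have op: "openin stone_topology U" using U clopenin_def by blast
  have "U \<subseteq> \<Union>(phi ` {a. phi a \<subseteq> U})" using op unfolding open_stone by blast
  then obtain V where V: "finite V" "V \<subseteq> phi ` {a. phi a \<subseteq> U}" "U \<subseteq> \<Union>V"
    using cp[of "phi ` {a. phi a \<subseteq> U}"] open_phi by blast
  then obtain S where S: "S \<subseteq> {a. phi a \<subseteq> U}" "finite S" "V = phi ` S"
    using finite_subset_image by metis
  have "U = \<Union>(phi ` S)" using S V by blast
  then show "\<exists>a. U = phi a" using phi_Union_fin[OF S(2)] by metis
next
  assume "\<exists>a. U = phi a" then show "clopenin stone_topology U" using clopen_phi by blast
qed


lemma ca_top: "conditional_algebra imp \<Longrightarrow> imp a top = top"
  by (simp add: conditional_algebra_def)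
lemma ca_inf: "conditional_algebra imp \<Longrightarrow> inf (imp a b) (imp a c) = imp a (inf b c)"
  by (simp add: conditional_algebra_def)
lemma ca_mono2: "conditional_algebra imp \<Longrightarrow> b \<le> c \<Longrightarrow> imp a b \<le> imp a c"
  by (metis ca_inf inf.absorb_iff1 inf.orderI)
lemma ca_anti1: "conditional_algebra imp \<Longrightarrow> a \<le> a' \<Longrightarrow> imp a' c \<le> imp a c"
proof -
  assume ca: "conditional_algebra imp" and le: "a \<le> a'"
  have "imp (sup a a') c \<le> inf (imp a c) (imp a' c)" using ca by (simp add: conditional_algebra_def)
  then show ?thesis using le by (simp add: sup_absorb2)
qed

definition up :: "'a::boolean_algebra \<Rightarrow> 'a set" where "up a = {b. a \<le> b}"

lemma up_filter: "ba_filter (up a)" unfolding ba_filter_def up_def by auto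
lemma phiF_up: "phiF (up a) = phi a"
  unfolding phiF_def phi_def up_def using filt_up Ul_filt by blast

lemma T_A_char: "ba_filter F \<Longrightarrow> T_A imp u (phiF F) v \<longleftrightarrow> u \<in> Ul \<and> v \<in> Ul \<and> D_imp imp u F \<subseteq> v"
  unfolding T_A_def using phiF_inj by metis

lemma D_up: "conditional_algebra imp \<Longrightarrow> u \<in> Ul \<Longrightarrow> D_imp imp u (up a) = {b. imp a b \<in> u}"
  unfolding D_imp_def up_def
  using ca_anti1 filt_up Ul_filt by blast

lemma D_filter: "conditional_algebra imp \<Longrightarrow> u \<in> Ul \<Longrightarrow> ba_filter {b. imp a b \<in> u}"
  unfolding ba_filter_def
proof (intro conjI allI impI)
  assume ca: "conditional_algebra imp" and u: "u \<in> Ul"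
  show "top \<in> {b. imp a b \<in> u}" using ca_top[OF ca] filt_top[OF Ul_filt[OF u]] by simp
  fix b c
  show "c \<in> {b. imp a b \<in> u}" if "b \<in> {b. imp a b \<in> u}" "b \<le> c"
    using that ca_mono2[OF ca, of b c a] filt_up[OF Ul_filt[OF u]] by blast
  show "inf b c \<in> {b. imp a b \<in> u}" if "b \<in> {b. imp a b \<in> u}" "c \<in> {b. imp a b \<in> u}"
    using that ca_inf[OF ca, of a b c] filt_inf[OF Ul_filt[OF u]] by fastforce
qed

lemma arrow_eq:
  assumes ca: "conditional_algebra imp"
  shows "arrow_T stone_topology (T_A imp) (phi a) (phi c) = phi (imp a c)"
proof -
  have "(\<forall>Z. closedin stone_topology Z \<longrightarrow> Z \<subseteq> phi a \<longrightarrow> Tset (T_A imp) x Z \<subseteq> phi c) \<longleftrightarrow> imp a c \<in> x"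
    if x: "x \<in> Ul" for x
  proof
    assume H: "\<forall>Z. closedin stone_topology Z \<longrightarrow> Z \<subseteq> phi a \<longrightarrow> Tset (T_A imp) x Z \<subseteq> phi c"
    show "imp a c \<in> x"
    proof (rule ccontr)
      assume n: "imp a c \<notin> x"
      obtain v where v: "v \<in> Ul" "{b. imp a b \<in> x} \<subseteq> v" "c \<notin> v"
        using sep[OF D_filter[OF ca x, of a], of c] n by blast
      have "T_A imp x (phiF (up a)) v"
        unfolding T_A_char[OF up_filter] D_up[OF ca x] using x v by blast
      then have "v \<in> Tset (T_A imp) x (phi a)" unfolding Tset_def phiF_up by simp
      moreover have "Tset (T_A imp) x (phi a) \<subseteq> phi c" using H closed_phi by blast
      ultimately show False using v(3) by (auto simp: phi_def)
    qed
  next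
    assume i: "imp a c \<in> x"
    show "\<forall>Z. closedin stone_topology Z \<longrightarrow> Z \<subseteq> phi a \<longrightarrow> Tset (T_A imp) x Z \<subseteq> phi c"
    proof (intro allI impI subsetI)
      fix Z y assume Z: "closedin stone_topology Z" "Z \<subseteq> phi a" and y: "y \<in> Tset (T_A imp) x Z"
      obtain F where F: "ba_filter F" "Z = phiF F" using Z(1) closed_char by blast
      have aF: "a \<in> F" using Z(2) F phiF_sub by blast
      have "T_A imp x (phiF F) y" using y F(2) by (simp add: Tset_def)
      then have "y \<in> Ul" "D_imp imp x F \<subseteq> y" using T_A_char[OF F(1)] by auto
      moreover have "c \<in> D_imp imp x F" using aF i by (auto simp: D_imp_def)
      ultimately show "y \<in> phi c" by (auto simp: phi_def)
    qed
  qed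
  then show ?thesis unfolding arrow_T_def topspace_stone
    by (auto simp: phi_def)
qed

theorem theorem5p4:
  fixes imp :: "'a::boolean_algebra \<Rightarrow> 'a \<Rightarrow> 'a"
  assumes "conditional_algebra imp"
  shows "conditional_space (stone_topology :: 'a set topology) (T_A imp)"
  unfolding conditional_space_def
proof (intro conjI allI impI)
  note ca = assms
  show "boolean_space (stone_topology :: 'a set topology)" by (rule boolean_stone)
  fix x :: "'a set" and Y :: "'a set set" and y :: "'a set"
  assume T: "T_A imp x Y y"
  then show "x \<in> topspace stone_topology" "y \<in> topspace stone_topology"
    by (auto simp: T_A_def topspace_stone)
  show "closedin stone_topology Y" using T closed_phiF by (auto simp: T_A_def)
next
  fix x :: "'a set" and Y :: "'a set set"
  assume x: "x \<in> topspace stone_topology" and Y: "closedin stone_topology Y"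
  obtain F where F: "ba_filter F" "Y = phiF F" using Y closed_char by blast
  have "Tset (T_A imp) x Y = phiF (D_imp imp x F)"
    using x unfolding Tset_def F(2) T_A_char[OF F(1)] topspace_stone by (auto simp: phiF_def)
  then show "closedin stone_topology (Tset (T_A imp) x Y)" using closed_phiF by simp
next
  fix U V :: "'a set set"
  assume "clopenin stone_topology U" "clopenin stone_topology V"
  then obtain a c where "U = phi a" "V = phi c" using clopen_char by metis
  then show "clopenin stone_topology (arrow_T stone_topology (T_A imp) U V)"
    using arrow_eq[OF assms] clopen_phi by simp
next
  fix x :: "'a set" and Y :: "'a set set" and y :: "'a set"
  assume x: "x \<in> topspace stone_topology" and y: "y \<in> topspace stone_topology"
    and Y: "closedin stone_topology Y"
  obtain F where F: "ba_filter F" "Y = phiF F" using Y closed_char by blast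
  have xU: "x \<in> Ul" and yU: "y \<in> Ul" using x y topspace_stone by auto
  have "(\<forall>U. clopenin stone_topology U \<longrightarrow> Y \<subseteq> U \<longrightarrow> T_A imp x U y) \<longleftrightarrow>
        (\<forall>a\<in>F. {b. imp a b \<in> x} \<subseteq> y)"
  proof -
    have "(\<forall>U. clopenin stone_topology U \<longrightarrow> Y \<subseteq> U \<longrightarrow> T_A imp x U y) \<longleftrightarrow>
          (\<forall>a. Y \<subseteq> phi a \<longrightarrow> T_A imp x (phi a) y)"
      using clopen_char by metis
    also have "\<dots> \<longleftrightarrow> (\<forall>a\<in>F. {b. imp a b \<in> x} \<subseteq> y)"
      unfolding F(2) phiF_sub[OF F(1)]
      using T_A_char[OF up_filter] phiF_up D_up[OF assms xU] xU yU by metis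
    finally show ?thesis .
  qed
  moreover have "D_imp imp x F = (\<Union>a\<in>F. {b. imp a b \<in> x})"
    unfolding D_imp_def by blast
  ultimately show "T_A imp x Y y \<longleftrightarrow> (\<forall>U. clopenin stone_topology U \<longrightarrow> Y \<subseteq> U \<longrightarrow> T_A imp x U y)"
    unfolding F(2) T_A_char[OF F(1)] using xU yU by blast
qed

end
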